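(* In the recursion below (with any $\eta>0$, any initial policy $\pi_0$, $Q_1\equiv0$), suppose the bonuses $\mathrm{CB}_k\ge0$ are valid for every $k=1,\dots,K$. Then $$\sum_{k=1}^K\big(\langle\mu^*,r\rangle-\langle\mu^{\pi_k},r\rangle\big)\le 2\sum_{k=1}^K\langle\mu^{\pi_k},\mathrm{CB}_k\rangle+2H+\frac1\eta\mathcal H(\pi^*\|\pi_0)+\frac{\eta H^3K}{2}.$$
   Context: Discounted MDP with finite $\mathcal X$, $\mathcal A$, reward $r:\mathcal X\times\mathcal A\to[0,1]$, transition kernel $P$, discount $\gamma\in(0,1)$, initial distribution $\nu_0$, $H=1/(1-\gamma)$. $(Pf)(x,a)=\sum_{x'}P(x'|x,a)f(x')$. For a policy $\pi$, $\nu^\pi(x)=(1-\gamma)\sum_{t\ge0}\gamma^t\mathbb P_\pi[X_t=x]$ with $X_0\sim\nu_0$, $\mu^\pi(x,a)=\nu^\pi(x)\pi(a|x)$, $\langle\mu,f\rangle=\sum_{x,a}\mu(x,a)f(x,a)$; $\pi^*$ is an optimal policy, $\mu^*=\mu^{\pi^*}$. Conditional relative entropy: $\mathcal H(\pi\|\pi')=\sum_x\nu^\pi(x)\mathrm{KL}(\pi(\cdot|x)\|\pi'(\cdot|x))$. Recursion: $V_k(x)=\frac1\eta\log\sum_a\pi_{k-1}(a|x)e^{\eta Q_k(x,a)}$, $\pi_k(a|x)=\pi_{k-1}(a|x)e^{\eta(Q_k(x,a)-V_k(x))}$, $Q_{k+1}=\Pi_H[r+\mathrm{CB}_k+\gamma\widehat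 P_kV_k]$, where $\widehat P_k$ is any real function on $\mathcal X\times\mathcal A\times\mathcal X$ acting by $(\widehat P_kf)(x,a)=\sum_{x'}\widehat P_k(x'|x,a)f(x')$, and $\Pi_Hf(z)=\max(\min(f(z),H),0)$. Validity for epoch $k$: for all $(x,a)$, $\big|\gamma\sum_{x'}(P(x'|x,a)-\widehat P_k(x'|x,a))V_k(x')\big|\le\mathrm{CB}_k(x,a)$. *)

theory Defs
  imports Complex_Main "HOL-Library.Extended_Real"
begin

(* Finite state type 'x, finite action type 'a.
   Policies: pol x a = pol(a|x).  Kernels: P x a x' = P(x'|x,a). *)

definition is_dist :: "('x::finite \<Rightarrow> real) \<Rightarrow> bool" where
  "is_dist d \<longleftrightarrow> (\<forall>x. d x \<ge> 0) \<and> (\<Sum>x\<in>UNIV. d x) = 1"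

definition is_policy :: "('x::finite \<Rightarrow> 'a::finite \<Rightarrow> real) \<Rightarrow> bool" where
  "is_policy pol \<longleftrightarrow> (\<forall>x. is_dist (pol x))"

definition is_kernel :: "('x::finite \<Rightarrow> 'a::finite \<Rightarrow> 'x \<Rightarrow> real) \<Rightarrow> bool" where
  "is_kernel P \<longleftrightarrow> (\<forall>x a. is_dist (P x a))"

primrec state_dist ::
  "('x::finite \<Rightarrow> 'a::finite \<Rightarrow> 'x \<Rightarrow> real) \<Rightarrow> ('x \<Rightarrow> real) \<Rightarrow> ('x \<Rightarrow> 'a \<Rightarrow> real) \<Rightarrow> nat \<Rightarrow> 'x \<Rightarrow> real"
where
  "state_dist P nu0 pol 0 = nu0"
| "state_dist P nu0 pol (Suc t) =
     (\<lambda>y. \<Sum>x\<in>UNIV. \<Sum>a\<in>UNIV. state_dist P nu0 pol t x * pol x a * P x a y)"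

definition occ_state ::
  "real \<Rightarrow> ('x::finite \<Rightarrow> 'a::finite \<Rightarrow> 'x \<Rightarrow> real) \<Rightarrow> ('x \<Rightarrow> real) \<Rightarrow> ('x \<Rightarrow> 'a \<Rightarrow> real) \<Rightarrow> 'x \<Rightarrow> real"
where
  "occ_state \<gamma> P nu0 pol x = (1 - \<gamma>) * (\<Sum>t. \<gamma> ^ t * state_dist P nu0 pol t x)"

definition occ ::
  "real \<Rightarrow> ('x::finite \<Rightarrow> 'a::finite \<Rightarrow> 'x \<Rightarrow> real) \<Rightarrow> ('x \<Rightarrow> real) \<Rightarrow> ('x \<Rightarrow> 'a \<Rightarrow> real) \<Rightarrow> 'x \<Rightarrow> 'a \<Rightarrow> real"
where
  "occ \<gamma> P nu0 pol x a = occ_state \<gamma> P nu0 pol x * pol x a"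

definition pair :: "('x::finite \<Rightarrow> 'a::finite \<Rightarrow> real) \<Rightarrow> ('x \<Rightarrow> 'a \<Rightarrow> real) \<Rightarrow> real" where
  "pair mu f = (\<Sum>x\<in>UNIV. \<Sum>a\<in>UNIV. mu x a * f x a)"

definition kapply :: "('x::finite \<Rightarrow> 'a \<Rightarrow> 'x \<Rightarrow> real) \<Rightarrow> ('x \<Rightarrow> real) \<Rightarrow> 'x \<Rightarrow> 'a \<Rightarrow> real" where
  "kapply P f x a = (\<Sum>x'\<in>UNIV. P x a x' * f x')"

definition value_fun ::
  "real \<Rightarrow> ('x::finite \<Rightarrow> 'a::finite \<Rightarrow> 'x \<Rightarrow> real) \<Rightarrow> ('x \<Rightarrow> 'a \<Rightarrow> real) \<Rightarrow> ('x \<Rightarrow> 'a \<Rightarrow> real) \<Rightarrow> 'x \<Rightarrow> real"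
where
  "value_fun \<gamma> P r pol x0 =
     (\<Sum>t. \<gamma> ^ t * (\<Sum>x\<in>UNIV. \<Sum>a\<in>UNIV.
          state_dist P (\<lambda>y. if y = x0 then 1 else 0) pol t x * pol x a * r x a))"

definition optimal_policy ::
  "real \<Rightarrow> ('x::finite \<Rightarrow> 'a::finite \<Rightarrow> 'x \<Rightarrow> real) \<Rightarrow> ('x \<Rightarrow> 'a \<Rightarrow> real) \<Rightarrow> ('x \<Rightarrow> 'a \<Rightarrow> real) \<Rightarrow> bool"
where
  "optimal_policy \<gamma> P r pol_s \<longleftrightarrow> is_policy pol_s \<and>
     (\<forall>pol. is_policy pol \<longrightarrow> (\<forall>x. value_fun \<gamma> P r pol x \<le> value_fun \<gamma> P r pol_s x))"

definition KL :: "('a::finite \<Rightarrow> real) \<Rightarrow> ('a \<Rightarrow> real) \<Rightarrow> ereal" where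
  "KL p q = (if (\<forall>a. p a > 0 \<longrightarrow> q a > 0)
             then ereal (\<Sum>a\<in>{a. p a > 0}. p a * ln (p a / q a))
             else \<infinity>)"

(* conditional relative entropy H(pol || pol') = sum_x nu^pol(x) KL(pol(.|x) || pol'(.|x)),
   with 0 * infinity = 0 *)
definition cond_rel_ent ::
  "real \<Rightarrow> ('x::finite \<Rightarrow> 'a::finite \<Rightarrow> 'x \<Rightarrow> real) \<Rightarrow> ('x \<Rightarrow> real) \<Rightarrow> ('x \<Rightarrow> 'a \<Rightarrow> real) \<Rightarrow> ('x \<Rightarrow> 'a \<Rightarrow> real) \<Rightarrow> ereal"
where
  "cond_rel_ent \<gamma> P nu0 pol pol' = (\<Sum>x\<in>UNIV. ereal (occ_state \<gamma> P nu0 pol x) * KL (pol x) (pol' x))"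

definition clip :: "real \<Rightarrow> real \<Rightarrow> real" where
  "clip H v = max (min v H) 0"

end

theory Submission
  imports Defs
begin


lemma dist_sum_pos: fixes p :: "'a::finite \<Rightarrow> real"
  assumes "is_dist p" shows "\<And>a. p a \<ge> 0" "(\<Sum>a\<in>UNIV. p a) = 1"
  using assms by (auto simp: is_dist_def)

lemma chord_aux:
  fixes y Z u :: real
  assumes "1 \<le> y" "y \<le> u" "1 \<le> Z" "Z \<le> u" "1 < u"
  shows "max (y - Z) 0 \<le> (y - 1) * (u - Z) / (u - 1)"
proof (cases "y \<le> Z")
  case True
  then show ?thesis using assms by (simp add: max_def divide_nonneg_pos)
next
  case False
  have "(y - Z) * (u - 1) \<le> (y - 1) * (u - Z)"
  proof -
    have "(y - 1) * (u - Z) - (y - Z) * (u - 1) = (Z - 1) * (u - y)" by (simp add: algebra_simps)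
    moreover have "(Z - 1) * (u - y) \<ge> 0" using assms by simp
    ultimately show ?thesis by linarith
  qed
  then show ?thesis using assms False by (simp add: max_def pos_le_divide_eq)
qed

lemma final_aux:
  fixes c Z :: real
  assumes c: "c > 0" and Z: "1 \<le> Z" "Z \<le> exp c"
  shows "2 * (Z - 1) * (exp c - Z) \<le> c * (Z * (exp c - 1))"
proof -
  define s where "s = exp (c/2)"
  have u: "exp c = s * s" unfolding s_def by (simp flip: exp_add)
  have s1: "s > 1" unfolding s_def using c by simp
  have lns: "1 - 1/s \<le> c/2"
  proof -
    have "1 - c/2 \<le> exp (-(c/2))" using exp_ge_add_one_self[of "-(c/2)"] by simp
    moreover have "exp (-(c/2)) = 1/s" unfolding s_def by (simp add: exp_minus field_simps)
    ultimately show ?thesis by simp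
  qed
  have k1: "s - 1 \<le> (s + 1) * (c/2)"
  proof -
    have "(s + 1) * (1 - 1/s) \<le> (s+1) * (c/2)" using lns s1 by (intro mult_left_mono) auto
    moreover have "(s + 1) * (1 - 1/s) = (s*s - 1)/s" using s1 by (simp add: field_simps)
    moreover have "s - 1 \<le> (s*s - 1)/s" using s1 by (simp add: field_simps)
    ultimately show ?thesis by linarith
  qed
  have amgm: "(Z - 1) * (s*s - Z) \<le> Z * (s - 1) * (s - 1)"
  proof -
    have "Z * (s - 1) * (s - 1) - (Z - 1) * (s*s - Z) = (Z - s) * (Z - s)" by (simp add: algebra_simps)
    moreover have "(Z - s) * (Z - s) \<ge> 0" by simp
    ultimately show ?thesis by linarith
  qed
  have k1': "2 * (s - 1) \<le> (s + 1) * c" using k1 by simp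
  have "2 * (Z * (s - 1) * (s - 1)) \<le> c * (Z * (s*s - 1))"
  proof -
    have "2 * (Z * (s - 1) * (s - 1)) = (Z * (s - 1)) * (2 * (s - 1))" by simp
    also have "\<dots> \<le> (Z * (s - 1)) * ((s + 1) * c)"
      using k1' s1 Z by (intro mult_left_mono) auto
    also have "\<dots> = c * (Z * (s*s - 1))" by (simp add: algebra_simps)
    finally show ?thesis .
  qed
  moreover have "2 * (Z - 1) * (exp c - Z) = 2 * ((Z - 1) * (s*s - Z))" using u by simp
  moreover have "2 * (Z - 1) * (s*s - Z) = 2 * ((Z - 1) * (s*s - Z))" by simp
  ultimately show ?thesis unfolding u using amgm by linarith
qed

lemma tilt_basic:
  fixes p q :: "'a::finite \<Rightarrow> real"
  assumes p: "is_dist p" and q: "\<And>a. 0 \<le> q a \<and> q a \<le> H" and eta: "\<eta> > 0"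
  assumes Z_def: "Z = (\<Sum>a\<in>UNIV. p a * exp (\<eta> * q a))"
  shows "1 \<le> Z" "Z \<le> exp (\<eta> * H)"
    "\<And>a. exp (\<eta> * (q a - (1/\<eta>) * ln Z)) = exp (\<eta> * q a) / Z"
proof -
  have "(\<Sum>a\<in>UNIV. p a * 1) \<le> Z" unfolding Z_def
    using p q eta by (intro sum_mono mult_left_mono) (auto simp: is_dist_def)
  then show Z1: "1 \<le> Z" using p by (simp add: is_dist_def)
  have "Z \<le> (\<Sum>a\<in>UNIV. p a * exp (\<eta> * H))" unfolding Z_def
    using p q eta by (intro sum_mono mult_left_mono) (auto simp: is_dist_def)
  then show "Z \<le> exp (\<eta> * H)" using p by (simp add: is_dist_def flip: sum_distrib_right)
  fix a
  have "\<eta> * (q a - (1/\<eta>) * ln Z) = \<eta> * q a - ln Z" using eta by (simp add: field_simps)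
  then show "exp (\<eta> * (q a - (1/\<eta>) * ln Z)) = exp (\<eta> * q a) / Z"
    using Z1 by (simp add: exp_diff)
qed

lemma tilt_TV:
  fixes p q :: "'a::finite \<Rightarrow> real"
  assumes p: "is_dist p" and q: "\<And>a. 0 \<le> q a \<and> q a \<le> H" and eta: "\<eta> > 0" and H: "H > 0"
  assumes Z_def: "Z = (\<Sum>a\<in>UNIV. p a * exp (\<eta> * q a))"
  shows "(\<Sum>a\<in>UNIV. \<bar>p a * exp (\<eta> * (q a - (1/\<eta>) * ln Z)) - p a\<bar>) \<le> \<eta> * H"
proof -
  note tb = tilt_basic[OF p q eta Z_def]
  define u where "u = exp (\<eta> * H)"
  have u1: "1 < u" unfolding u_def using eta H by simp
  have Zpos: "Z > 0" using tb by simp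
  have pnn: "\<And>a. p a \<ge> 0" and ps: "(\<Sum>a\<in>UNIV. p a) = 1" using p by (auto simp: is_dist_def)
  have ey: "\<And>a. 1 \<le> exp (\<eta> * q a) \<and> exp (\<eta> * q a) \<le> u"
    unfolding u_def using q eta by (auto intro: mult_left_mono)
  have eq1: "\<And>a. \<bar>p a * exp (\<eta> * (q a - (1/\<eta>) * ln Z)) - p a\<bar>
     = 2 * (p a * max (exp (\<eta> * q a) - Z) 0 / Z) - (p a * exp (\<eta> * q a) / Z - p a)"
  proof -
    fix a
    have "p a * exp (\<eta> * (q a - (1/\<eta>) * ln Z)) - p a = p a * (exp (\<eta> * q a) - Z) / Z"
      unfolding tb(3) using Zpos by (simp add: field_simps)
    then have "\<bar>p a * exp (\<eta> * (q a - (1/\<eta>) * ln Z)) - p a\<bar> = \<bar>p a\<bar> * \<bar>exp (\<eta> * q a) - Z\<bar> / \<bar>Z\<bar>"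
      by (simp add: abs_mult)
    also have "\<dots> = p a * \<bar>exp (\<eta> * q a) - Z\<bar> / Z" using pnn[of a] Zpos by simp
    also have "\<dots> = 2 * (p a * max (exp (\<eta> * q a) - Z) 0 / Z) - (p a * exp (\<eta> * q a) / Z - p a)"
      using Zpos by (simp add: max_def abs_if field_simps)
    finally show "?thesis a" .
  qed
  have s2: "(\<Sum>a\<in>UNIV. p a * exp (\<eta> * q a) / Z - p a) = 0"
    using Zpos ps by (simp add: sum_subtractf flip: sum_divide_distrib Z_def)
  have s1: "(\<Sum>a\<in>UNIV. p a * max (exp (\<eta> * q a) - Z) 0 / Z)
       \<le> (\<Sum>a\<in>UNIV. p a * ((exp (\<eta> * q a) - 1) * (u - Z) / (u - 1)) / Z)"
    using Zpos pnn ey tb u1 by (intro sum_mono divide_right_mono mult_left_mono chord_aux) (auto simp: u_def)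
  also have "\<dots> = (\<Sum>a\<in>UNIV. (p a * exp (\<eta> * q a) - p a) * ((u - Z) / (u - 1) / Z))"
    using u1 Zpos by (intro sum.cong) (auto simp: field_simps)
  also have "\<dots> = ((\<Sum>a\<in>UNIV. p a * exp (\<eta> * q a)) - (\<Sum>a\<in>UNIV. p a)) * ((u - Z) / (u - 1) / Z)"
    unfolding sum_distrib_right[symmetric] sum_subtractf by (rule refl)
  also have "\<dots> = (Z - 1) * (u - Z) / (u - 1) / Z" using ps Z_def by (simp add: field_simps)
  finally have s1': "(\<Sum>a\<in>UNIV. p a * max (exp (\<eta> * q a) - Z) 0 / Z) \<le> (Z - 1) * (u - Z) / (u - 1) / Z" .
  have fin: "2 * ((Z - 1) * (u - Z) / (u - 1) / Z) \<le> \<eta> * H"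
  proof -
    have "2 * (Z - 1) * (u - Z) \<le> (\<eta> * H) * (Z * (u - 1))"
      using final_aux[of "\<eta> * H" Z] eta H tb unfolding u_def by simp
    then show ?thesis using Zpos u1 by (simp add: field_simps)
  qed
  have "(\<Sum>a\<in>UNIV. \<bar>p a * exp (\<eta> * (q a - (1/\<eta>) * ln Z)) - p a\<bar>)
      = 2 * (\<Sum>a\<in>UNIV. p a * max (exp (\<eta> * q a) - Z) 0 / Z) - (\<Sum>a\<in>UNIV. p a * exp (\<eta> * q a) / Z - p a)"
    unfolding sum.cong[OF refl eq1] sum_subtractf sum_distrib_left by (rule refl)
  also have "\<dots> \<le> \<eta> * H" using s1' s2 fin by linarith
  finally show ?thesis .
qed

lemma tilt_dist:
  fixes p q :: "'a::finite \<Rightarrow> real"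
  assumes p: "is_dist p" and q: "\<And>a. 0 \<le> q a \<and> q a \<le> H" and eta: "\<eta> > 0"
  assumes Z_def: "Z = (\<Sum>a\<in>UNIV. p a * exp (\<eta> * q a))"
  shows "is_dist (\<lambda>a. p a * exp (\<eta> * (q a - (1/\<eta>) * ln Z)))"
proof -
  note tb = tilt_basic[OF p q eta Z_def]
  have Zpos: "Z > 0" using tb by simp
  have pnn: "\<And>a. p a \<ge> 0" using p by (auto simp: is_dist_def)
  have "(\<Sum>a\<in>UNIV. p a * exp (\<eta> * (q a - (1/\<eta>) * ln Z))) = (\<Sum>a\<in>UNIV. p a * exp (\<eta> * q a)) / Z"
    unfolding tb(3) by (simp add: sum_divide_distrib)
  then show ?thesis using Zpos pnn Z_def by (auto simp: is_dist_def)
qed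

lemma tilt_shift:
  fixes p q :: "'a::finite \<Rightarrow> real"
  assumes p: "is_dist p" and q: "\<And>a. 0 \<le> q a \<and> q a \<le> H" and eta: "\<eta> > 0" and H: "H > 0"
  assumes Z_def: "Z = (\<Sum>a\<in>UNIV. p a * exp (\<eta> * q a))"
  shows "(\<Sum>a\<in>UNIV. (p a * exp (\<eta> * (q a - (1/\<eta>) * ln Z)) - p a) * q a) \<le> \<eta> * H^2 / 2"
proof -
  define \<rho> where "\<rho> a = p a * exp (\<eta> * (q a - (1/\<eta>) * ln Z))" for a
  have rd: "is_dist \<rho>" unfolding \<rho>_def by (rule tilt_dist[OF p q eta Z_def])
  have tv: "(\<Sum>a\<in>UNIV. \<bar>\<rho> a - p a\<bar>) \<le> \<eta> * H" unfolding \<rho>_def by (rule tilt_TV[OF p q eta H Z_def])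
  have s0: "(\<Sum>a\<in>UNIV. (\<rho> a - p a)) = 0" using rd p by (simp add: is_dist_def sum_subtractf)
  have "(\<Sum>a\<in>UNIV. (\<rho> a - p a) * q a) = (\<Sum>a\<in>UNIV. (\<rho> a - p a) * (q a - H/2)) + (\<Sum>a\<in>UNIV. (\<rho> a - p a)) * (H/2)"
  proof -
    have "(\<Sum>a\<in>UNIV. (\<rho> a - p a) * q a) = (\<Sum>a\<in>UNIV. (\<rho> a - p a) * (q a - H/2) + (\<rho> a - p a) * (H/2))"
      by (intro sum.cong) (auto simp: algebra_simps)
    also have "\<dots> = (\<Sum>a\<in>UNIV. (\<rho> a - p a) * (q a - H/2)) + (\<Sum>a\<in>UNIV. (\<rho> a - p a)) * (H/2)"
      by (simp add: sum.distrib sum_distrib_right)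
    finally show ?thesis .
  qed
  also have "\<dots> = (\<Sum>a\<in>UNIV. (\<rho> a - p a) * (q a - H/2))" using s0 by simp
  also have "\<dots> \<le> (\<Sum>a\<in>UNIV. \<bar>\<rho> a - p a\<bar> * (H/2))"
  proof (intro sum_mono)
    fix a
    have "\<bar>q a - H/2\<bar> \<le> H/2" using q[of a] unfolding abs_le_iff by linarith
    then have "(\<rho> a - p a) * (q a - H/2) \<le> \<bar>\<rho> a - p a\<bar> * \<bar>q a - H/2\<bar>"
      by (metis abs_ge_self abs_mult)
    also have "\<dots> \<le> \<bar>\<rho> a - p a\<bar> * (H/2)" using \<open>\<bar>q a - H/2\<bar> \<le> H/2\<close> by (intro mult_left_mono) auto
    finally show "(\<rho> a - p a) * (q a - H/2) \<le> \<bar>\<rho> a - p a\<bar> * (H/2)" .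
  qed
  also have "\<dots> = (\<Sum>a\<in>UNIV. \<bar>\<rho> a - p a\<bar>) * (H/2)" by (simp add: sum_distrib_right)
  also have "\<dots> \<le> (\<eta> * H) * (H/2)" using tv H by (intro mult_right_mono) auto
  also have "\<dots> = \<eta> * H^2 / 2" by (simp add: power2_eq_square)
  finally show ?thesis unfolding \<rho>_def .
qed

lemma tilt_gibbs:
  fixes p q :: "'a::finite \<Rightarrow> real"
  assumes p: "is_dist p" and q: "\<And>a. 0 \<le> q a \<and> q a \<le> H" and eta: "\<eta> > 0"
  assumes Z_def: "Z = (\<Sum>a\<in>UNIV. p a * exp (\<eta> * q a))"
  shows "(1/\<eta>) * ln Z \<le> (\<Sum>a\<in>UNIV. p a * exp (\<eta> * (q a - (1/\<eta>) * ln Z)) * q a)"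
proof -
  define W where "W = (1/\<eta>) * ln Z"
  define \<rho> where "\<rho> a = p a * exp (\<eta> * (q a - W))" for a
  have rd: "is_dist \<rho>" unfolding \<rho>_def W_def by (rule tilt_dist[OF p q eta Z_def])
  have pnn: "\<And>a. p a \<ge> 0" using p by (auto simp: is_dist_def)
  have key: "\<rho> a - p a \<le> \<rho> a * (\<eta> * (q a - W))" for a
  proof -
    define x where "x = \<eta> * (q a - W)"
    have "1 - x \<le> exp (-x)" using exp_ge_add_one_self[of "-x"] by simp
    then have "(1 - x) * exp x \<le> exp (-x) * exp x" by (intro mult_right_mono) auto
    then have "(1 - x) * exp x \<le> 1" by (simp flip: exp_add)
    then have "p a * ((1 - x) * exp x) \<le> p a * 1" using pnn[of a] by (intro mult_left_mono) auto
    then show ?thesis unfolding \<rho>_def x_def[symmetric] by (simp add: algebra_simps)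
  qed
  have "0 = (\<Sum>a\<in>UNIV. \<rho> a - p a)" using rd p by (simp add: is_dist_def sum_subtractf)
  also have "\<dots> \<le> (\<Sum>a\<in>UNIV. \<rho> a * (\<eta> * (q a - W)))" by (intro sum_mono key)
  also have "\<dots> = \<eta> * ((\<Sum>a\<in>UNIV. \<rho> a * q a) - W * (\<Sum>a\<in>UNIV. \<rho> a))"
    by (simp add: sum_distrib_left sum_subtractf sum_distrib_right algebra_simps)
  also have "\<dots> = \<eta> * ((\<Sum>a\<in>UNIV. \<rho> a * q a) - W)" using rd by (simp add: is_dist_def)
  finally have "W \<le> (\<Sum>a\<in>UNIV. \<rho> a * q a)" using eta by (simp add: zero_le_mult_iff)
  then show ?thesis unfolding \<rho>_def W_def .
qed

definition klr :: "('a::finite \<Rightarrow> real) \<Rightarrow> ('a \<Rightarrow> real) \<Rightarrow> real" where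
  "klr p q = (\<Sum>a\<in>{a. p a > 0}. p a * ln (p a / q a))"

lemma klr_nonneg:
  fixes p r :: "'a::finite \<Rightarrow> real"
  assumes p: "is_dist p" and r: "is_dist r" and supp: "\<And>a. p a > 0 \<Longrightarrow> r a > 0"
  shows "klr p r \<ge> 0"
proof -
  have key: "p a - r a \<le> p a * ln (p a / r a)" if "p a > 0" for a
  proof -
    have ra: "r a > 0" using supp that .
    have "ln (r a / p a) \<le> r a / p a - 1" using ra that by (intro ln_le_minus_one) auto
    moreover have "ln (p a / r a) = - ln (r a / p a)" using ra that by (simp add: ln_div)
    ultimately have "1 - r a / p a \<le> ln (p a / r a)" by simp
    then have "p a * (1 - r a / p a) \<le> p a * ln (p a / r a)" using that by (intro mult_left_mono) auto
    then show ?thesis using that by (simp add: algebra_simps)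
  qed
  have "(\<Sum>a\<in>{a. p a > 0}. p a - r a) \<le> klr p r" unfolding klr_def by (intro sum_mono key) auto
  moreover have "(\<Sum>a\<in>{a. p a > 0}. p a) = 1"
  proof -
    have "(\<Sum>a\<in>UNIV. p a) = (\<Sum>a\<in>{a. p a > 0}. p a)"
      using p by (intro sum.mono_neutral_right) (auto simp: is_dist_def order.strict_iff_order)
    then show ?thesis using p by (simp add: is_dist_def)
  qed
  moreover have "(\<Sum>a\<in>{a. p a > 0}. r a) \<le> (\<Sum>a\<in>UNIV. r a)"
    using r by (intro sum_mono2) (auto simp: is_dist_def)
  ultimately show ?thesis using r by (simp add: sum_subtractf is_dist_def)
qed

lemma tilt_kl:
  fixes p q ps :: "'a::finite \<Rightarrow> real"
  assumes p: "is_dist p" and q: "\<And>a. 0 \<le> q a \<and> q a \<le> H" and eta: "\<eta> > 0"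
  assumes Z_def: "Z = (\<Sum>a\<in>UNIV. p a * exp (\<eta> * q a))"
  assumes ps: "is_dist ps" and supp: "\<And>a. ps a > 0 \<Longrightarrow> p a > 0"
  shows "(\<Sum>a\<in>UNIV. ps a * (q a - (1/\<eta>) * ln Z))
     = (1/\<eta>) * (klr ps p - klr ps (\<lambda>a. p a * exp (\<eta> * (q a - (1/\<eta>) * ln Z))))"
proof -
  define W where "W = (1/\<eta>) * ln Z"
  have psn: "\<And>a. ps a \<ge> 0" using ps by (auto simp: is_dist_def)
  have "klr ps p - klr ps (\<lambda>a. p a * exp (\<eta> * (q a - W)))
      = (\<Sum>a\<in>{a. ps a > 0}. ps a * ln (ps a / p a) - ps a * ln (ps a / (p a * exp (\<eta> * (q a - W)))))"
    unfolding klr_def by (simp add: sum_subtractf)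
  also have "\<dots> = (\<Sum>a\<in>{a. ps a > 0}. ps a * (\<eta> * (q a - W)))"
  proof (intro sum.cong refl)
    fix a assume "a \<in> {a. ps a > 0}"
    then have a1: "ps a > 0" and a2: "p a > 0" using supp by auto
    have lnB: "ln (ps a / (p a * exp (\<eta> * (q a - W)))) = ln (ps a / p a) - \<eta> * (q a - W)"
      using a1 a2 by (simp add: ln_div ln_mult)
    show "ps a * ln (ps a / p a) - ps a * ln (ps a / (p a * exp (\<eta> * (q a - W)))) = ps a * (\<eta> * (q a - W))"
      unfolding lnB by (simp add: algebra_simps)
  qed
  also have "\<dots> = (\<Sum>a\<in>UNIV. ps a * (\<eta> * (q a - W)))"
    using psn by (intro sum.mono_neutral_left) (auto simp: order.strict_iff_order)
  also have "\<dots> = \<eta> * (\<Sum>a\<in>UNIV. ps a * (q a - W))" by (simp add: sum_distrib_left algebra_simps)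
  finally show ?thesis using eta unfolding W_def[symmetric] by simp
qed



lemma sd_dist:
  assumes P: "is_kernel P" and nu0: "is_dist nu0" and pol: "is_policy pol"
  shows "is_dist (state_dist P nu0 pol t)"
proof (induction t)
  case 0 then show ?case using nu0 by simp
next
  case (Suc t)
  let ?d = "state_dist P nu0 pol t"
  have nn: "\<And>y. 0 \<le> state_dist P nu0 pol (Suc t) y"
    using Suc P pol unfolding is_dist_def is_kernel_def is_policy_def
    by (simp only: state_dist.simps) (intro sum_nonneg mult_nonneg_nonneg; blast)
  have "(\<Sum>y\<in>UNIV. state_dist P nu0 pol (Suc t) y)
      = (\<Sum>y\<in>UNIV. \<Sum>x\<in>UNIV. \<Sum>a\<in>UNIV. ?d x * pol x a * P x a y)" by simp
  also have "\<dots> = (\<Sum>x\<in>UNIV. \<Sum>y\<in>UNIV. \<Sum>a\<in>UNIV. ?d x * pol x a * P x a y)"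
    by (rule sum.swap)
  also have "\<dots> = (\<Sum>x\<in>UNIV. \<Sum>a\<in>UNIV. \<Sum>y\<in>UNIV. ?d x * pol x a * P x a y)"
    by (intro sum.cong refl sum.swap)
  also have "\<dots> = (\<Sum>x\<in>UNIV. \<Sum>a\<in>UNIV. ?d x * pol x a * (\<Sum>y\<in>UNIV. P x a y))"
    by (simp add: sum_distrib_left)
  also have "\<dots> = (\<Sum>x\<in>UNIV. ?d x * (\<Sum>a\<in>UNIV. pol x a))"
    using P by (simp add: is_kernel_def is_dist_def sum_distrib_left)
  also have "\<dots> = 1" using pol Suc by (simp add: is_policy_def is_dist_def)
  finally show ?case using nn by (simp add: is_dist_def)
qed

lemma sd_bounds:
  assumes P: "is_kernel P" and nu0: "is_dist nu0" and pol: "is_policy pol"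
  shows "0 \<le> state_dist P nu0 pol t x" "state_dist P nu0 pol t x \<le> 1"
proof -
  have d: "is_dist (state_dist P nu0 pol t)" by (rule sd_dist[OF assms])
  then show "0 \<le> state_dist P nu0 pol t x" by (simp add: is_dist_def)
  have "state_dist P nu0 pol t x \<le> (\<Sum>y\<in>UNIV. state_dist P nu0 pol t y)"
    using d by (intro member_le_sum) (auto simp: is_dist_def)
  then show "state_dist P nu0 pol t x \<le> 1" using d by (simp add: is_dist_def)
qed

lemma occ_summable:
  assumes P: "is_kernel P" and nu0: "is_dist nu0" and pol: "is_policy pol"
    and g: "0 \<le> \<gamma>" "\<gamma> < 1"
  shows "summable (\<lambda>t. \<gamma> ^ t * state_dist P nu0 pol t x)"
proof (rule summable_comparison_test[of _ "\<lambda>t. \<gamma> ^ t"])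
  show "\<exists>N. \<forall>n\<ge>N. norm (\<gamma> ^ n * state_dist P nu0 pol n x) \<le> \<gamma> ^ n"
    using sd_bounds[OF assms(1-3)] g by (auto simp: abs_mult intro!: mult_left_le)
  show "summable (\<lambda>t. \<gamma> ^ t)" using g by (simp add: summable_geometric)
qed

lemma occ_dist:
  assumes P: "is_kernel P" and nu0: "is_dist nu0" and pol: "is_policy pol"
    and g: "0 \<le> \<gamma>" "\<gamma> < 1"
  shows "is_dist (occ_state \<gamma> P nu0 pol)"
proof -
  note sm = occ_summable[OF assms]
  have nn: "0 \<le> occ_state \<gamma> P nu0 pol x" for x
    unfolding occ_state_def using g sd_bounds[OF P nu0 pol]
    by (intro mult_nonneg_nonneg suminf_nonneg sm) auto
  have "(\<Sum>x\<in>UNIV. occ_state \<gamma> P nu0 pol x) = (1 - \<gamma>) * (\<Sum>x\<in>UNIV. \<Sum>t. \<gamma> ^ t * state_dist P nu0 pol t x)"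
    unfolding occ_state_def by (simp add: sum_distrib_left)
  also have "(\<Sum>x\<in>UNIV. \<Sum>t. \<gamma> ^ t * state_dist P nu0 pol t x) = (\<Sum>t. \<Sum>x\<in>UNIV. \<gamma> ^ t * state_dist P nu0 pol t x)"
    using sm by (simp add: suminf_sum)
  also have "\<dots> = (\<Sum>t. \<gamma> ^ t)"
    using sd_dist[OF P nu0 pol] by (simp add: is_dist_def flip: sum_distrib_left)
  also have "\<dots> = 1 / (1 - \<gamma>)" using g by (simp add: suminf_geometric)
  finally show ?thesis using nn g by (simp add: is_dist_def)
qed

lemma occ_flow:
  assumes P: "is_kernel P" and nu0: "is_dist nu0" and pol: "is_policy pol"
    and g: "0 \<le> \<gamma>" "\<gamma> < 1"
  shows "occ_state \<gamma> P nu0 pol y = (1 - \<gamma>) * nu0 y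
     + \<gamma> * (\<Sum>x\<in>UNIV. \<Sum>a\<in>UNIV. occ_state \<gamma> P nu0 pol x * pol x a * P x a y)"
proof -
  note sm = occ_summable[OF assms]
  define S where "S x = (\<Sum>t. \<gamma> ^ t * state_dist P nu0 pol t x)" for x
  have "(\<Sum>t. \<gamma> ^ Suc t * state_dist P nu0 pol (Suc t) y) = S y - nu0 y"
    unfolding S_def using suminf_split_head[OF sm[of y]] by simp
  moreover have "(\<Sum>t. \<gamma> ^ Suc t * state_dist P nu0 pol (Suc t) y)
      = (\<Sum>t. \<Sum>x\<in>UNIV. \<Sum>a\<in>UNIV. (\<gamma> * pol x a * P x a y) * (\<gamma> ^ t * state_dist P nu0 pol t x))"
    by (simp add: sum_distrib_left algebra_simps)
  moreover have "\<dots> = (\<Sum>x\<in>UNIV. \<Sum>a\<in>UNIV. (\<Sum>t. (\<gamma> * pol x a * P x a y) * (\<gamma> ^ t * state_dist P nu0 pol t x)))"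
    using sm by (simp add: suminf_sum summable_sum summable_mult)
  moreover have "\<dots> = (\<Sum>x\<in>UNIV. \<Sum>a\<in>UNIV. (\<gamma> * pol x a * P x a y) * S x)"
    unfolding S_def using sm by (simp add: suminf_mult)
  ultimately have "S y = nu0 y + \<gamma> * (\<Sum>x\<in>UNIV. \<Sum>a\<in>UNIV. S x * pol x a * P x a y)"
    by (simp add: sum_distrib_left algebra_simps)
  then have "(1 - \<gamma>) * S y = (1 - \<gamma>) * nu0 y + \<gamma> * (\<Sum>x\<in>UNIV. \<Sum>a\<in>UNIV. ((1 - \<gamma>) * S x) * pol x a * P x a y)"
    by (simp add: sum_distrib_left algebra_simps)
  then show ?thesis unfolding occ_state_def S_def .
qed

lemma occ_pairP:
  assumes P: "is_kernel P" and nu0: "is_dist nu0" and pol: "is_policy pol"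
    and g: "0 \<le> \<gamma>" "\<gamma> < 1"
  shows "(\<Sum>x\<in>UNIV. \<Sum>a\<in>UNIV. occ_state \<gamma> P nu0 pol x * pol x a * (\<gamma> * kapply P f x a))
    = (\<Sum>y\<in>UNIV. occ_state \<gamma> P nu0 pol y * f y) - (1 - \<gamma>) * (\<Sum>y\<in>UNIV. nu0 y * f y)"
proof -
  let ?n = "occ_state \<gamma> P nu0 pol"
  have "(\<Sum>y\<in>UNIV. ?n y * f y) = (\<Sum>y\<in>UNIV. ((1 - \<gamma>) * nu0 y
     + \<gamma> * (\<Sum>x\<in>UNIV. \<Sum>a\<in>UNIV. ?n x * pol x a * P x a y)) * f y)"
    by (subst occ_flow[OF assms]) (rule refl)
  also have "\<dots> = (1 - \<gamma>) * (\<Sum>y\<in>UNIV. nu0 y * f y)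
      + (\<Sum>y\<in>UNIV. \<Sum>x\<in>UNIV. \<Sum>a\<in>UNIV. \<gamma> * ?n x * pol x a * P x a y * f y)"
  proof -
    have "(\<Sum>y\<in>UNIV. ((1 - \<gamma>) * nu0 y
     + \<gamma> * (\<Sum>x\<in>UNIV. \<Sum>a\<in>UNIV. ?n x * pol x a * P x a y)) * f y)
      = (\<Sum>y\<in>UNIV. (1 - \<gamma>) * (nu0 y * f y) + (\<Sum>x\<in>UNIV. \<Sum>a\<in>UNIV. \<gamma> * ?n x * pol x a * P x a y * f y))"
      by (intro sum.cong refl) (simp add: sum_distrib_left sum_distrib_right algebra_simps)
    then show ?thesis by (simp only: sum.distrib sum_distrib_left)
  qed
  also have "(\<Sum>y\<in>UNIV. \<Sum>x\<in>UNIV. \<Sum>a\<in>UNIV. \<gamma> * ?n x * pol x a * P x a y * f y)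
      = (\<Sum>x\<in>UNIV. \<Sum>y\<in>UNIV. \<Sum>a\<in>UNIV. \<gamma> * ?n x * pol x a * P x a y * f y)"
    by (rule sum.swap)
  also have "\<dots> = (\<Sum>x\<in>UNIV. \<Sum>a\<in>UNIV. \<Sum>y\<in>UNIV. \<gamma> * ?n x * pol x a * P x a y * f y)"
    by (intro sum.cong refl sum.swap)
  also have "\<dots> = (\<Sum>x\<in>UNIV. \<Sum>a\<in>UNIV. ?n x * pol x a * (\<gamma> * kapply P f x a))"
    unfolding kapply_def by (simp add: sum_distrib_left algebra_simps)
  finally show ?thesis by simp
qed

lemma occ_diff:
  assumes P: "is_kernel P" and nu0: "is_dist nu0" and pol: "is_policy pol" and pol': "is_policy pol'"
    and g: "0 \<le> \<gamma>" "\<gamma> < 1"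
    and del: "\<And>x. (\<Sum>a\<in>UNIV. \<bar>pol' x a - pol x a\<bar>) \<le> \<delta>"
  shows "(\<Sum>y\<in>UNIV. \<bar>occ_state \<gamma> P nu0 pol' y - occ_state \<gamma> P nu0 pol y\<bar>) \<le> \<gamma> * \<delta> / (1 - \<gamma>)"
proof -
  let ?n = "occ_state \<gamma> P nu0 pol" and ?n' = "occ_state \<gamma> P nu0 pol'"
  define d where "d y = ?n' y - ?n y" for y
  have Pn: "\<And>x a y. P x a y \<ge> 0" and Ps: "\<And>x a. (\<Sum>y\<in>UNIV. P x a y) = 1"
    using P by (auto simp: is_kernel_def is_dist_def)
  have pn: "\<And>x a. pol' x a \<ge> 0" and ps: "\<And>x. (\<Sum>a\<in>UNIV. pol' x a) = 1"
    using pol' by (auto simp: is_policy_def is_dist_def)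
  have nd: "is_dist ?n" by (rule occ_dist[OF P nu0 pol g])
  have dy: "d y = \<gamma> * (\<Sum>x\<in>UNIV. \<Sum>a\<in>UNIV. d x * pol' x a * P x a y + ?n x * (pol' x a - pol x a) * P x a y)" for y
    unfolding d_def
    by (subst occ_flow[OF P nu0 pol' g], subst occ_flow[OF P nu0 pol g])
       (simp add: sum_subtractf sum.distrib algebra_simps)
  have ady: "\<bar>d y\<bar> \<le> \<gamma> * (\<Sum>x\<in>UNIV. \<Sum>a\<in>UNIV. \<bar>d x\<bar> * pol' x a * P x a y + ?n x * \<bar>pol' x a - pol x a\<bar> * P x a y)" for y
  proof -
    have "\<bar>d y\<bar> = \<gamma> * \<bar>\<Sum>x\<in>UNIV. \<Sum>a\<in>UNIV. d x * pol' x a * P x a y + ?n x * (pol' x a - pol x a) * P x a y\<bar>"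
      using g by (subst dy) (simp add: abs_mult)
    also have "\<dots> \<le> \<gamma> * (\<Sum>x\<in>UNIV. \<Sum>a\<in>UNIV. \<bar>d x * pol' x a * P x a y + ?n x * (pol' x a - pol x a) * P x a y\<bar>)"
      using g by (intro mult_left_mono order.trans[OF sum_abs] sum_mono sum_abs) auto
    also have "\<dots> \<le> \<gamma> * (\<Sum>x\<in>UNIV. \<Sum>a\<in>UNIV. \<bar>d x\<bar> * pol' x a * P x a y + ?n x * \<bar>pol' x a - pol x a\<bar> * P x a y)"
    proof (intro mult_left_mono sum_mono)
      fix x a
      show "\<bar>d x * pol' x a * P x a y + ?n x * (pol' x a - pol x a) * P x a y\<bar>
         \<le> \<bar>d x\<bar> * pol' x a * P x a y + ?n x * \<bar>pol' x a - pol x a\<bar> * P x a y"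
        using pn[of x a] Pn[of x a y] nd
        by (auto simp: is_dist_def abs_mult intro: order.trans[OF abs_triangle_ineq])
    qed (use g in auto)
    finally show ?thesis .
  qed
  have "(\<Sum>y\<in>UNIV. \<bar>d y\<bar>) \<le> (\<Sum>y\<in>UNIV. \<gamma> * (\<Sum>x\<in>UNIV. \<Sum>a\<in>UNIV. \<bar>d x\<bar> * pol' x a * P x a y + ?n x * \<bar>pol' x a - pol x a\<bar> * P x a y))"
    by (intro sum_mono ady)
  also have "\<dots> = \<gamma> * (\<Sum>x\<in>UNIV. \<Sum>a\<in>UNIV. \<Sum>y\<in>UNIV. \<bar>d x\<bar> * pol' x a * P x a y + ?n x * \<bar>pol' x a - pol x a\<bar> * P x a y)"
  proof -
    have "(\<Sum>y\<in>UNIV. \<Sum>x\<in>UNIV. \<Sum>a\<in>UNIV. \<bar>d x\<bar> * pol' x a * P x a y + ?n x * \<bar>pol' x a - pol x a\<bar> * P x a y)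
       = (\<Sum>x\<in>UNIV. \<Sum>y\<in>UNIV. \<Sum>a\<in>UNIV. \<bar>d x\<bar> * pol' x a * P x a y + ?n x * \<bar>pol' x a - pol x a\<bar> * P x a y)"
      by (rule sum.swap)
    also have "\<dots> = (\<Sum>x\<in>UNIV. \<Sum>a\<in>UNIV. \<Sum>y\<in>UNIV. \<bar>d x\<bar> * pol' x a * P x a y + ?n x * \<bar>pol' x a - pol x a\<bar> * P x a y)"
      by (intro sum.cong refl sum.swap)
    finally show ?thesis by (simp only: sum_distrib_left[symmetric])
  qed
  also have "\<dots> = \<gamma> * (\<Sum>x\<in>UNIV. \<Sum>a\<in>UNIV. \<bar>d x\<bar> * pol' x a + ?n x * \<bar>pol' x a - pol x a\<bar>)"
    by (simp add: sum.distrib Ps flip: sum_distrib_left)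
  also have "\<dots> = \<gamma> * ((\<Sum>x\<in>UNIV. \<bar>d x\<bar>) + (\<Sum>x\<in>UNIV. ?n x * (\<Sum>a\<in>UNIV. \<bar>pol' x a - pol x a\<bar>)))"
    by (simp add: sum.distrib ps flip: sum_distrib_left)
  finally have h1: "(\<Sum>y\<in>UNIV. \<bar>d y\<bar>) \<le> \<gamma> * ((\<Sum>x\<in>UNIV. \<bar>d x\<bar>) + (\<Sum>x\<in>UNIV. ?n x * (\<Sum>a\<in>UNIV. \<bar>pol' x a - pol x a\<bar>)))" .
  have "(\<Sum>x\<in>UNIV. ?n x * (\<Sum>a\<in>UNIV. \<bar>pol' x a - pol x a\<bar>)) \<le> (\<Sum>x\<in>UNIV. ?n x * \<delta>)"
    using nd del by (intro sum_mono mult_left_mono) (auto simp: is_dist_def)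
  also have "(\<Sum>x\<in>UNIV. ?n x * \<delta>) = \<delta>" using nd by (simp add: is_dist_def flip: sum_distrib_right)
  finally have "\<gamma> * (\<Sum>x\<in>UNIV. ?n x * (\<Sum>a\<in>UNIV. \<bar>pol' x a - pol x a\<bar>)) \<le> \<gamma> * \<delta>"
    using g by (intro mult_left_mono) auto
  then have "(\<Sum>y\<in>UNIV. \<bar>d y\<bar>) \<le> \<gamma> * ((\<Sum>x\<in>UNIV. \<bar>d x\<bar>) + \<delta>)" using h1 by (simp add: algebra_simps)
  then have "(1 - \<gamma>) * (\<Sum>y\<in>UNIV. \<bar>d y\<bar>) \<le> \<gamma> * \<delta>" by (simp add: algebra_simps)
  then show ?thesis unfolding d_def using g by (simp add: field_simps)
qed



lemma pair_split: "pair (occ \<gamma> P nu0 pol) f = (\<Sum>x\<in>UNIV. occ_state \<gamma> P nu0 pol x * (\<Sum>a\<in>UNIV. pol x a * f x a))"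
  unfolding pair_def occ_def by (simp add: sum_distrib_left mult.assoc)

lemma occ_shift:
  assumes P: "is_kernel P" and nu0: "is_dist nu0" and pol: "is_policy pol"
    and g: "0 \<le> \<gamma>" "\<gamma> < 1"
  shows "(\<Sum>x\<in>UNIV. occ_state \<gamma> P nu0 pol x * (\<Sum>a\<in>UNIV. pol x a * (h x a - \<gamma> * kapply P f x a)))
    = (\<Sum>x\<in>UNIV. occ_state \<gamma> P nu0 pol x * ((\<Sum>a\<in>UNIV. pol x a * h x a) - f x)) + (1 - \<gamma>) * (\<Sum>y\<in>UNIV. nu0 y * f y)"
proof -
  let ?n = "occ_state \<gamma> P nu0 pol"
  have "(\<Sum>x\<in>UNIV. ?n x * (\<Sum>a\<in>UNIV. pol x a * (h x a - \<gamma> * kapply P f x a)))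
     = (\<Sum>x\<in>UNIV. ?n x * (\<Sum>a\<in>UNIV. pol x a * h x a)) - (\<Sum>x\<in>UNIV. \<Sum>a\<in>UNIV. ?n x * pol x a * (\<gamma> * kapply P f x a))"
    by (simp add: sum_subtractf right_diff_distrib sum_distrib_left mult.assoc)
  also have "\<dots> = (\<Sum>x\<in>UNIV. ?n x * (\<Sum>a\<in>UNIV. pol x a * h x a)) - ((\<Sum>y\<in>UNIV. ?n y * f y) - (1 - \<gamma>) * (\<Sum>y\<in>UNIV. nu0 y * f y))"
    by (simp only: occ_pairP[OF assms])
  also have "\<dots> = (\<Sum>x\<in>UNIV. ?n x * ((\<Sum>a\<in>UNIV. pol x a * h x a) - f x)) + (1 - \<gamma>) * (\<Sum>y\<in>UNIV. nu0 y * f y)"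
    by (simp add: right_diff_distrib sum_subtractf)
  finally show ?thesis .
qed

lemma abs_half: fixes w h :: real assumes "0 \<le> w" "w \<le> h" shows "\<bar>w - h/2\<bar> \<le> h/2"
  using assms unfolding abs_le_iff by linarith

lemma cube_aux: fixes c h :: real assumes "c * h = 1" shows "h^2 = c * h^3"
proof -
  have "c * h^3 = (c * h) * (h * h)" by (simp add: power3_eq_cube algebra_simps)
  then show ?thesis using assms by (simp add: power2_eq_square)
qed

lemma lin_aux:
  fixes A R C c S1 S1' y1 y2 y3 Tn T' T'' ne ne' nf nf' e f :: real
  assumes "A \<le> 2 * C + S1 + y1 - Tn + ne + nf"
    and "R \<le> (S1' - S1) + y2 - (T' - T'') + e + 2 * c"
    and "T'' - Tn \<le> f" and "y1 + y2 = y3" and "ne' = ne + e" and "nf' = nf + f"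
  shows "A + R \<le> 2 * (C + c) + S1' + y3 - T' + ne' + nf'"
  using assms by argo

lemma hh_aux: fixes h2 h3 g t k :: real
  assumes "h2 = (1 - g) * h3"
  shows "k * (t * h2 / 2) + (k - 1) * (g * t * h3 / 2) = t * h3 * k / 2 - g * t * h3 / 2"
  unfolding assms by (simp add: field_simps)

locale alg =
  fixes P :: "'x::finite \<Rightarrow> 'a::finite \<Rightarrow> 'x \<Rightarrow> real"
    and r :: "'x \<Rightarrow> 'a \<Rightarrow> real"
    and \<gamma> \<eta> :: real
    and nu0 :: "'x \<Rightarrow> real"
    and pol_s :: "'x \<Rightarrow> 'a \<Rightarrow> real"
    and pol :: "nat \<Rightarrow> 'x \<Rightarrow> 'a \<Rightarrow> real"
    and Q CB :: "nat \<Rightarrow> 'x \<Rightarrow> 'a \<Rightarrow> real"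
    and V :: "nat \<Rightarrow> 'x \<Rightarrow> real"
    and Phat :: "nat \<Rightarrow> 'x \<Rightarrow> 'a \<Rightarrow> 'x \<Rightarrow> real"
    and K :: nat
  assumes kernel: "is_kernel P"
    and rew: "\<forall>x a. 0 \<le> r x a \<and> r x a \<le> 1"
    and gam: "0 < \<gamma>" "\<gamma> < 1"
    and init: "is_dist nu0"
    and opt: "optimal_policy \<gamma> P r pol_s"
    and eta: "\<eta> > 0"
    and pi0: "is_policy (pol 0)"
    and Q1: "\<forall>x a. Q 1 x a = 0"
    and V_rec: "\<forall>k x. 1 \<le> k \<and> k \<le> K \<longrightarrow>
        V k x = (1 / \<eta>) * ln (\<Sum>a\<in>UNIV. pol (k - 1) x a * exp (\<eta> * Q k x a))"
    and pi_rec: "\<forall>k x a. 1 \<le> k \<and> k \<le> K \<longrightarrow>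
        pol k x a = pol (k - 1) x a * exp (\<eta> * (Q k x a - V k x))"
    and Q_rec: "\<forall>k x a. 1 \<le> k \<and> k \<le> K \<longrightarrow>
        Q (k + 1) x a = clip (1 / (1 - \<gamma>)) (r x a + CB k x a + \<gamma> * kapply (Phat k) (V k) x a)"
    and CB_nonneg: "\<forall>k x a. 1 \<le> k \<and> k \<le> K \<longrightarrow> CB k x a \<ge> 0"
    and valid: "\<forall>k x a. 1 \<le> k \<and> k \<le> K \<longrightarrow>
        \<bar>\<gamma> * (\<Sum>x'\<in>UNIV. (P x a x' - Phat k x a x') * V k x')\<bar> \<le> CB k x a"
begin

abbreviation "H \<equiv> 1 / (1 - \<gamma>)"

lemma H_pos: "H > 0" and H1: "H \<ge> 1" and Hg: "1 + \<gamma> * H = H"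
  using gam by (auto simp: field_simps)

lemma Q_bnd: "1 \<le> k \<Longrightarrow> k \<le> K + 1 \<Longrightarrow> 0 \<le> Q k x a \<and> Q k x a \<le> H"
proof (cases "k = 1")
  case True then show ?thesis using Q1 H_pos by simp
next
  case False
  assume "1 \<le> k" "k \<le> K + 1"
  then have j: "k = (k - 1) + 1" "1 \<le> k - 1" "k - 1 \<le> K" using False by auto
  then show ?thesis using Q_rec H_pos unfolding clip_def by auto
qed

definition W :: "nat \<Rightarrow> 'x \<Rightarrow> real" where
  "W k x = (1/\<eta>) * ln (\<Sum>a\<in>UNIV. pol k x a * exp (\<eta> * Q (k+1) x a))"

definition rho :: "nat \<Rightarrow> 'x \<Rightarrow> 'a \<Rightarrow> real" where
  "rho k x a = pol k x a * exp (\<eta> * (Q (k+1) x a - W k x))"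

lemma V_W: "1 \<le> k \<Longrightarrow> k < K \<Longrightarrow> V (k+1) = W k"
  using V_rec unfolding W_def by (auto intro!: ext)

lemma pol_rho: "k < K \<Longrightarrow> pol (k+1) = rho k"
proof -
  assume k: "k < K"
  have "pol (k+1) x a = pol k x a * exp (\<eta> * (Q (k+1) x a - W k x))" for x a
    using pi_rec V_rec k unfolding W_def by auto
  then show ?thesis unfolding rho_def by (intro ext)
qed

lemma pol_policy: "k \<le> K \<Longrightarrow> is_policy (pol k) \<and> (\<forall>x a. pol 0 x a > 0 \<longrightarrow> pol k x a > 0)"
proof (induction k)
  case 0 then show ?case using pi0 by simp
next
  case (Suc k)
  then have ih: "is_policy (pol k)" "\<And>x a. pol 0 x a > 0 \<Longrightarrow> pol k x a > 0" by auto
  have eq: "pol (Suc k) = rho k" using pol_rho[of k] Suc by simp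
  have "is_dist (rho k x)" for x
    unfolding rho_def W_def
    by (rule tilt_dist[where H = H]) (use ih Q_bnd Suc eta in \<open>auto simp: is_policy_def\<close>)
  then show ?case using ih unfolding eq is_policy_def rho_def by auto
qed

lemma W_bnd: "k \<le> K \<Longrightarrow> 0 \<le> W k x \<and> W k x \<le> H"
proof -
  assume k: "k \<le> K"
  have p: "is_dist (pol k x)" using pol_policy[OF k] by (simp add: is_policy_def)
  have q: "\<And>a. 0 \<le> Q (k+1) x a \<and> Q (k+1) x a \<le> H" using Q_bnd k by simp
  note tb = tilt_basic[where q="\<lambda>a. Q (k+1) x a", OF p q eta refl]
  have "0 \<le> ln (\<Sum>a\<in>UNIV. pol k x a * exp (\<eta> * Q (k+1) x a))" using tb by simp
  moreover have "ln (\<Sum>a\<in>UNIV. pol k x a * exp (\<eta> * Q (k+1) x a)) \<le> \<eta> * H"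
  proof -
    have "ln (\<Sum>a\<in>UNIV. pol k x a * exp (\<eta> * Q (k+1) x a)) \<le> ln (exp (\<eta> * H))"
      using tb by (intro ln_mono) auto
    then show ?thesis by simp
  qed
  ultimately show ?thesis unfolding W_def using eta by (auto simp: field_simps)
qed

lemma V_bnd: "1 \<le> k \<Longrightarrow> k \<le> K \<Longrightarrow> 0 \<le> V k x \<and> V k x \<le> H"
proof -
  assume k: "1 \<le> k" "k \<le> K"
  define j where "j = k - 1"
  have j: "k = j + 1" using k unfolding j_def by simp
  have "V k x = W j x" using V_rec k unfolding W_def j by auto
  then show ?thesis using W_bnd[of j] k j by simp
qed

lemma V1: "1 \<le> K \<Longrightarrow> V 1 x = 0"
  using V_rec Q1 pi0 by (auto simp: is_policy_def is_dist_def)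

lemma pol1: "1 \<le> K \<Longrightarrow> pol 1 = pol 0"
  using pi_rec V1 Q1 by (auto intro!: ext)

lemma kapply_bnd: "1 \<le> k \<Longrightarrow> k \<le> K \<Longrightarrow> 0 \<le> kapply P (V k) x a \<and> kapply P (V k) x a \<le> H"
proof -
  assume k: "1 \<le> k" "k \<le> K"
  have Pn: "\<And>y. P x a y \<ge> 0" and Ps: "(\<Sum>y\<in>UNIV. P x a y) = 1"
    using kernel by (auto simp: is_kernel_def is_dist_def)
  have "0 \<le> kapply P (V k) x a" unfolding kapply_def using Pn V_bnd[OF k] by (auto intro!: sum_nonneg)
  moreover have "kapply P (V k) x a \<le> (\<Sum>y\<in>UNIV. P x a y * H)"
    unfolding kapply_def
  proof (rule sum_mono)
    fix y
    show "P x a y * V k y \<le> P x a y * H" using Pn[of y] V_bnd[OF k, of y] by (intro mult_left_mono) auto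
  qed
  moreover have "(\<Sum>y\<in>UNIV. P x a y * H) = H" using Ps by (simp only: sum_distrib_right[symmetric])
  ultimately show ?thesis by simp
qed

lemma sandwich:
  assumes k: "1 \<le> k" "k \<le> K"
  shows "r x a + \<gamma> * kapply P (V k) x a \<le> Q (k+1) x a"
    "Q (k+1) x a \<le> r x a + \<gamma> * kapply P (V k) x a + 2 * CB k x a"
proof -
  define v where "v = r x a + CB k x a + \<gamma> * kapply (Phat k) (V k) x a"
  have Qv: "Q (k+1) x a = max (min v H) 0" using Q_rec k unfolding v_def clip_def by auto
  have diff: "(\<Sum>x'\<in>UNIV. (P x a x' - Phat k x a x') * V k x') = kapply P (V k) x a - kapply (Phat k) (V k) x a"
    unfolding kapply_def by (simp add: sum_subtractf algebra_simps)
  have va: "\<bar>\<gamma> * (kapply P (V k) x a - kapply (Phat k) (V k) x a)\<bar> \<le> CB k x a"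
    using valid k diff by metis
  have kb: "0 \<le> kapply P (V k) x a \<and> kapply P (V k) x a \<le> H" by (rule kapply_bnd[OF k])
  have rb: "0 \<le> r x a \<and> r x a \<le> 1" using rew by auto
  have lo: "0 \<le> r x a + \<gamma> * kapply P (V k) x a" using kb rb gam by auto
  have hi: "r x a + \<gamma> * kapply P (V k) x a \<le> H"
  proof -
    have "\<gamma> * kapply P (V k) x a \<le> \<gamma> * H" using kb gam by (intro mult_left_mono) auto
    then show ?thesis using rb Hg by linarith
  qed
  have l1: "r x a + \<gamma> * kapply P (V k) x a \<le> v" using va unfolding v_def by (simp add: algebra_simps abs_le_iff)
  have l2: "v \<le> r x a + \<gamma> * kapply P (V k) x a + 2 * CB k x a" using va unfolding v_def by (simp add: algebra_simps abs_le_iff)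
  show "r x a + \<gamma> * kapply P (V k) x a \<le> Q (k+1) x a" using Qv lo hi l1 by linarith
  show "Q (k+1) x a \<le> r x a + \<gamma> * kapply P (V k) x a + 2 * CB k x a"
    using Qv lo l2 CB_nonneg k by (auto simp: max_def min_def)
qed

lemma pols: "is_policy pol_s" using opt by (simp add: optimal_policy_def)

abbreviation "ns \<equiv> occ_state \<gamma> P nu0 pol_s"
abbreviation "nk k \<equiv> occ_state \<gamma> P nu0 (pol k)"

lemma ns_dist: "is_dist ns" using occ_dist[OF kernel init pols] gam by simp
lemma nk_dist: "k \<le> K \<Longrightarrow> is_dist (nk k)" using occ_dist[OF kernel init] pol_policy gam by simp

lemma step1:
  assumes k: "1 \<le> k" "k \<le> K"
  shows "pair (occ \<gamma> P nu0 pol_s) r - pair (occ \<gamma> P nu0 (pol k)) r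
    \<le> (\<Sum>x\<in>UNIV. ns x * ((\<Sum>a\<in>UNIV. pol_s x a * Q (k+1) x a) - V k x))
     - (\<Sum>x\<in>UNIV. nk k x * ((\<Sum>a\<in>UNIV. pol k x a * Q (k+1) x a) - V k x))
     + 2 * pair (occ \<gamma> P nu0 (pol k)) (CB k)"
proof -
  have pk: "is_policy (pol k)" using pol_policy k by simp
  have g: "0 \<le> \<gamma>" "\<gamma> < 1" using gam by auto
  have u: "pair (occ \<gamma> P nu0 pol_s) r \<le> (\<Sum>x\<in>UNIV. ns x * (\<Sum>a\<in>UNIV. pol_s x a * (Q (k+1) x a - \<gamma> * kapply P (V k) x a)))"
    unfolding pair_split using ns_dist pols sandwich(1)[OF k]
    by (intro sum_mono mult_left_mono) (auto simp: is_dist_def is_policy_def algebra_simps)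
  have l: "(\<Sum>x\<in>UNIV. nk k x * (\<Sum>a\<in>UNIV. pol k x a * ((Q (k+1) x a - 2 * CB k x a) - \<gamma> * kapply P (V k) x a))) \<le> pair (occ \<gamma> P nu0 (pol k)) r"
    unfolding pair_split using nk_dist[OF k(2)] pk sandwich(2)[OF k]
    by (intro sum_mono mult_left_mono) (auto simp: is_dist_def is_policy_def algebra_simps)
  have cb: "(\<Sum>x\<in>UNIV. nk k x * ((\<Sum>a\<in>UNIV. pol k x a * (Q (k+1) x a - 2 * CB k x a)) - V k x))
     = (\<Sum>x\<in>UNIV. nk k x * ((\<Sum>a\<in>UNIV. pol k x a * Q (k+1) x a) - V k x)) - 2 * pair (occ \<gamma> P nu0 (pol k)) (CB k)"
  proof -
    have i: "(\<Sum>a\<in>UNIV. pol k x a * (Q (k+1) x a - 2 * CB k x a)) = (\<Sum>a\<in>UNIV. pol k x a * Q (k+1) x a) - 2 * (\<Sum>a\<in>UNIV. pol k x a * CB k x a)" for x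
      by (simp add: right_diff_distrib sum_subtractf sum_distrib_left mult.left_commute)
    have "(\<Sum>x\<in>UNIV. nk k x * ((\<Sum>a\<in>UNIV. pol k x a * (Q (k+1) x a - 2 * CB k x a)) - V k x))
       = (\<Sum>x\<in>UNIV. nk k x * ((\<Sum>a\<in>UNIV. pol k x a * Q (k+1) x a) - V k x) - 2 * (nk k x * (\<Sum>a\<in>UNIV. pol k x a * CB k x a)))"
      by (intro sum.cong refl, subst i) (simp add: algebra_simps)
    also have "\<dots> = (\<Sum>x\<in>UNIV. nk k x * ((\<Sum>a\<in>UNIV. pol k x a * Q (k+1) x a) - V k x)) - 2 * (\<Sum>x\<in>UNIV. nk k x * (\<Sum>a\<in>UNIV. pol k x a * CB k x a))"
      by (simp add: sum_subtractf sum_distrib_left)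
    finally show ?thesis unfolding pair_split .
  qed
  show ?thesis
    using u l occ_shift[OF kernel init pols g, of "Q (k+1)" "V k"]
      occ_shift[OF kernel init pk g, of "\<lambda>x a. Q (k+1) x a - 2 * CB k x a" "V k"] cb
    by linarith
qed

definition D :: "nat \<Rightarrow> real" where "D k = (\<Sum>x\<in>UNIV. ns x * klr (pol_s x) (pol k x))"
definition D' :: "nat \<Rightarrow> real" where "D' k = (\<Sum>x\<in>UNIV. ns x * klr (pol_s x) (rho k x))"

lemma policy_tilt_lower:
  assumes k: "k \<le> K"
  shows "W k x - \<eta> * H^2 / 2 \<le> (\<Sum>a\<in>UNIV. pol k x a * Q (k+1) x a)"
proof -
  have p: "is_dist (pol k x)" using pol_policy[OF k] by (simp add: is_policy_def)
  have q: "\<And>a. 0 \<le> Q (k+1) x a \<and> Q (k+1) x a \<le> H" using Q_bnd k by simp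
  have g1: "W k x \<le> (\<Sum>a\<in>UNIV. rho k x a * Q (k+1) x a)"
    unfolding W_def rho_def by (rule tilt_gibbs[OF p q eta refl])
  have g2: "(\<Sum>a\<in>UNIV. (rho k x a - pol k x a) * Q (k+1) x a) \<le> \<eta> * H^2 / 2"
    unfolding W_def rho_def by (rule tilt_shift[OF p q eta H_pos refl])
  have "(\<Sum>a\<in>UNIV. (rho k x a - pol k x a) * Q (k+1) x a)
     = (\<Sum>a\<in>UNIV. rho k x a * Q (k+1) x a) - (\<Sum>a\<in>UNIV. pol k x a * Q (k+1) x a)"
    by (simp add: left_diff_distrib sum_subtractf)
  then show ?thesis using g1 g2 by linarith
qed

lemma kl_step:
  assumes k: "k \<le> K" and supp0: "\<forall>x. ns x > 0 \<longrightarrow> (\<forall>a. pol_s x a > 0 \<longrightarrow> pol 0 x a > 0)"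
  shows "(\<Sum>x\<in>UNIV. ns x * (\<Sum>a\<in>UNIV. pol_s x a * (Q (k+1) x a - W k x))) = (1/\<eta>) * (D k - D' k)"
proof -
  have "ns x * (\<Sum>a\<in>UNIV. pol_s x a * (Q (k+1) x a - W k x))
      = (1/\<eta>) * (ns x * klr (pol_s x) (pol k x) - ns x * klr (pol_s x) (rho k x))" for x
  proof (cases "ns x > 0")
    case True
    have p: "is_dist (pol k x)" using pol_policy[OF k] by (simp add: is_policy_def)
    have q: "\<And>a. 0 \<le> Q (k+1) x a \<and> Q (k+1) x a \<le> H" using Q_bnd k by simp
    have ps: "is_dist (pol_s x)" using pols by (simp add: is_policy_def)
    have supp: "\<And>a. pol_s x a > 0 \<Longrightarrow> pol k x a > 0" using supp0 True pol_policy[OF k] by blast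
    have "(\<Sum>a\<in>UNIV. pol_s x a * (Q (k+1) x a - W k x)) = (1/\<eta>) * (klr (pol_s x) (pol k x) - klr (pol_s x) (rho k x))"
      unfolding W_def rho_def[abs_def] by (rule tilt_kl[OF p q eta refl ps supp])
    then have "ns x * (\<Sum>a\<in>UNIV. pol_s x a * (Q (k+1) x a - W k x)) = ns x * ((1/\<eta>) * (klr (pol_s x) (pol k x) - klr (pol_s x) (rho k x)))"
      by (rule arg_cong)
    also have "\<dots> = (1/\<eta>) * (ns x * klr (pol_s x) (pol k x) - ns x * klr (pol_s x) (rho k x))"
      by (simp add: right_diff_distrib mult.left_commute)
    finally show ?thesis .
  next
    case False
    then have "ns x = 0" using ns_dist by (simp add: is_dist_def order.strict_iff_order)
    then show ?thesis by simp
  qed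
  then have "(\<Sum>x\<in>UNIV. ns x * (\<Sum>a\<in>UNIV. pol_s x a * (Q (k+1) x a - W k x)))
     = (\<Sum>x\<in>UNIV. (1/\<eta>) * (ns x * klr (pol_s x) (pol k x) - ns x * klr (pol_s x) (rho k x)))"
    by (rule sum.cong[OF refl])
  also have "\<dots> = (1/\<eta>) * (D k - D' k)" unfolding D_def D'_def
    by (simp only: sum_distrib_left[symmetric] sum_subtractf)
  finally show ?thesis .
qed

lemma step2:
  assumes k: "1 \<le> k" "k \<le> K" and supp0: "\<forall>x. ns x > 0 \<longrightarrow> (\<forall>a. pol_s x a > 0 \<longrightarrow> pol 0 x a > 0)"
  shows "pair (occ \<gamma> P nu0 pol_s) r - pair (occ \<gamma> P nu0 (pol k)) r
    \<le> (\<Sum>x\<in>UNIV. ns x * (W k x - V k x)) + (1/\<eta>) * (D k - D' k)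
     - (\<Sum>x\<in>UNIV. nk k x * (W k x - V k x)) + \<eta> * H^2 / 2
     + 2 * pair (occ \<gamma> P nu0 (pol k)) (CB k)"
proof -
  have a: "(\<Sum>x\<in>UNIV. ns x * ((\<Sum>a\<in>UNIV. pol_s x a * Q (k+1) x a) - V k x))
     = (\<Sum>x\<in>UNIV. ns x * (W k x - V k x)) + (\<Sum>x\<in>UNIV. ns x * (\<Sum>a\<in>UNIV. pol_s x a * (Q (k+1) x a - W k x)))"
  proof -
    have "ns x * ((\<Sum>a\<in>UNIV. pol_s x a * Q (k+1) x a) - V k x)
       = ns x * (W k x - V k x) + ns x * (\<Sum>a\<in>UNIV. pol_s x a * (Q (k+1) x a - W k x))" for x
    proof -
      have "(\<Sum>a\<in>UNIV. pol_s x a * (Q (k+1) x a - W k x)) = (\<Sum>a\<in>UNIV. pol_s x a * Q (k+1) x a) - W k x"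
        using pols by (simp add: is_policy_def is_dist_def right_diff_distrib sum_subtractf flip: sum_distrib_right)
      then have h: "(\<Sum>a\<in>UNIV. pol_s x a * Q (k+1) x a) = W k x + (\<Sum>a\<in>UNIV. pol_s x a * (Q (k+1) x a - W k x))"
        by linarith
      show ?thesis by (subst h) (simp only: distrib_left right_diff_distrib diff_add_eq add_diff_eq add.commute)
    qed
    then show ?thesis by (simp add: sum.distrib)
  qed
  have b: "(\<Sum>x\<in>UNIV. nk k x * (W k x - V k x)) - \<eta> * H^2 / 2
      \<le> (\<Sum>x\<in>UNIV. nk k x * ((\<Sum>a\<in>UNIV. pol k x a * Q (k+1) x a) - V k x))"
  proof -
    have "(\<Sum>x\<in>UNIV. nk k x * (W k x - V k x)) - \<eta> * H^2 / 2
        = (\<Sum>x\<in>UNIV. nk k x * ((W k x - \<eta> * H^2 / 2) - V k x))"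
    proof -
      have "(\<Sum>x\<in>UNIV. nk k x * ((W k x - \<eta> * H^2 / 2) - V k x))
          = (\<Sum>x\<in>UNIV. nk k x * (W k x - V k x) - nk k x * (\<eta> * H^2 / 2))"
        by (intro sum.cong refl) (simp add: algebra_simps)
      also have "\<dots> = (\<Sum>x\<in>UNIV. nk k x * (W k x - V k x)) - (\<Sum>x\<in>UNIV. nk k x) * (\<eta> * H^2 / 2)"
        by (simp only: sum_subtractf sum_distrib_right)
      also have "\<dots> = (\<Sum>x\<in>UNIV. nk k x * (W k x - V k x)) - \<eta> * H^2 / 2"
        using nk_dist[OF k(2)] by (simp add: is_dist_def)
      finally show ?thesis by simp
    qed
    also have "\<dots> \<le> (\<Sum>x\<in>UNIV. nk k x * ((\<Sum>a\<in>UNIV. pol k x a * Q (k+1) x a) - V k x))"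
      using nk_dist[OF k(2)] policy_tilt_lower[OF k(2)]
      by (intro sum_mono mult_left_mono) (auto simp: is_dist_def)
    finally show ?thesis .
  qed
  show ?thesis using step1[OF k] a b kl_step[OF k(2) supp0] by linarith
qed

lemma drift:
  assumes n: "n < K"
  shows "(\<Sum>x\<in>UNIV. nk (n+1) x * W n x) - (\<Sum>x\<in>UNIV. nk n x * W n x) \<le> \<gamma> * \<eta> * H^3 / 2"
proof -
  have g: "0 \<le> \<gamma>" "\<gamma> < 1" using gam by auto
  have tv: "(\<Sum>a\<in>UNIV. \<bar>pol (n+1) x a - pol n x a\<bar>) \<le> \<eta> * H" for x
  proof -
    have p: "is_dist (pol n x)" using pol_policy n by (simp add: is_policy_def)
    have q: "\<And>a. 0 \<le> Q (n+1) x a \<and> Q (n+1) x a \<le> H" using Q_bnd n by simp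
    show ?thesis unfolding pol_rho[OF n] rho_def W_def by (rule tilt_TV[OF p q eta H_pos refl])
  qed
  have od: "(\<Sum>y\<in>UNIV. \<bar>nk (n+1) y - nk n y\<bar>) \<le> \<gamma> * (\<eta> * H) / (1 - \<gamma>)"
    by (rule occ_diff[OF kernel init _ _ g tv]) (use pol_policy n in auto)
  have s1: "(\<Sum>y\<in>UNIV. nk (n+1) y) = 1" "(\<Sum>y\<in>UNIV. nk n y) = 1"
    using nk_dist[of n] nk_dist[of "n+1"] n by (auto simp: is_dist_def)
  have "(\<Sum>x\<in>UNIV. nk (n+1) x * W n x) - (\<Sum>x\<in>UNIV. nk n x * W n x)
      = (\<Sum>x\<in>UNIV. (nk (n+1) x - nk n x) * W n x)" by (simp add: left_diff_distrib sum_subtractf)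
  also have "\<dots> = (\<Sum>x\<in>UNIV. (nk (n+1) x - nk n x) * (W n x - H/2) + (nk (n+1) x - nk n x) * (H/2))"
    by (intro sum.cong refl) (simp add: algebra_simps)
  also have "\<dots> = (\<Sum>x\<in>UNIV. (nk (n+1) x - nk n x) * (W n x - H/2)) + (\<Sum>x\<in>UNIV. (nk (n+1) x - nk n x)) * (H/2)"
    by (simp only: sum.distrib sum_distrib_right)
  also have "\<dots> = (\<Sum>x\<in>UNIV. (nk (n+1) x - nk n x) * (W n x - H/2))" using s1 by (simp add: sum_subtractf)
  also have "\<dots> \<le> (\<Sum>x\<in>UNIV. \<bar>nk (n+1) x - nk n x\<bar> * (H/2))"
  proof (intro sum_mono)
    fix x
    have "0 \<le> W n x \<and> W n x \<le> H" using W_bnd[of n x] n by simp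
    then have "\<bar>W n x - H/2\<bar> \<le> H/2" by (intro abs_half) auto
    have "(nk (n+1) x - nk n x) * (W n x - H/2) \<le> \<bar>nk (n+1) x - nk n x\<bar> * \<bar>W n x - H/2\<bar>"
      by (metis abs_ge_self abs_mult)
    also have "\<dots> \<le> \<bar>nk (n+1) x - nk n x\<bar> * (H/2)" using \<open>\<bar>W n x - H/2\<bar> \<le> H/2\<close> by (intro mult_left_mono) auto
    finally show "(nk (n+1) x - nk n x) * (W n x - H/2) \<le> \<bar>nk (n+1) x - nk n x\<bar> * (H/2)" .
  qed
  also have "\<dots> = (\<Sum>y\<in>UNIV. \<bar>nk (n+1) y - nk n y\<bar>) * (H/2)" by (rule sum_distrib_right[symmetric])
  also have "\<dots> \<le> (\<gamma> * (\<eta> * H) / (1 - \<gamma>)) * (H/2)" using od H_pos by (intro mult_right_mono) auto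
  also have "\<dots> = \<gamma> * \<eta> * H^3 / 2" using gam by (simp add: field_simps power3_eq_cube)
  finally show ?thesis .
qed

lemma accum:
  assumes n: "1 \<le> n" "n \<le> K" and supp0: "\<forall>x. ns x > 0 \<longrightarrow> (\<forall>a. pol_s x a > 0 \<longrightarrow> pol 0 x a > 0)"
  shows "(\<Sum>k=1..n. pair (occ \<gamma> P nu0 pol_s) r - pair (occ \<gamma> P nu0 (pol k)) r)
    \<le> 2 * (\<Sum>k=1..n. pair (occ \<gamma> P nu0 (pol k)) (CB k)) + (\<Sum>x\<in>UNIV. ns x * W n x)
      + (1/\<eta>) * (D 1 - D' n) - (\<Sum>x\<in>UNIV. nk n x * W n x)
      + real n * (\<eta> * H^2 / 2) + (real n - 1) * (\<gamma> * \<eta> * H^3 / 2)"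
  using n
proof (induction n rule: nat_induct_at_least)
  case base
  have "V 1 x = 0" for x using V1 base by simp
  then show ?case using step2[of 1] base supp0 by simp
next
  case (Suc n)
  then have n1: "1 \<le> n" "n < K" by auto
  have st: "pair (occ \<gamma> P nu0 pol_s) r - pair (occ \<gamma> P nu0 (pol (Suc n))) r
    \<le> (\<Sum>x\<in>UNIV. ns x * (W (Suc n) x - V (Suc n) x)) + (1/\<eta>) * (D (Suc n) - D' (Suc n))
     - (\<Sum>x\<in>UNIV. nk (Suc n) x * (W (Suc n) x - V (Suc n) x)) + \<eta> * H^2 / 2
     + 2 * pair (occ \<gamma> P nu0 (pol (Suc n))) (CB (Suc n))"
    using step2[of "Suc n"] Suc supp0 by simp
  have vw: "V (Suc n) = W n" using V_W[of n] n1 by simp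
  have dd: "D (Suc n) = D' n" unfolding D_def D'_def using pol_rho[OF n1(2)] by simp
  have e1: "(\<Sum>x\<in>UNIV. ns x * (W (Suc n) x - W n x)) = (\<Sum>x\<in>UNIV. ns x * W (Suc n) x) - (\<Sum>x\<in>UNIV. ns x * W n x)"
    by (simp add: right_diff_distrib sum_subtractf)
  have e2: "(\<Sum>x\<in>UNIV. nk (Suc n) x * (W (Suc n) x - W n x)) = (\<Sum>x\<in>UNIV. nk (Suc n) x * W (Suc n) x) - (\<Sum>x\<in>UNIV. nk (Suc n) x * W n x)"
    by (simp add: right_diff_distrib sum_subtractf)
  have dr: "(\<Sum>x\<in>UNIV. nk (Suc n) x * W n x) - (\<Sum>x\<in>UNIV. nk n x * W n x) \<le> \<gamma> * \<eta> * H^3 / 2"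
    using drift[OF n1(2)] by simp
  have ih: "(\<Sum>k=1..n. pair (occ \<gamma> P nu0 pol_s) r - pair (occ \<gamma> P nu0 (pol k)) r)
    \<le> 2 * (\<Sum>k=1..n. pair (occ \<gamma> P nu0 (pol k)) (CB k)) + (\<Sum>x\<in>UNIV. ns x * W n x)
      + (1/\<eta>) * (D 1 - D' n) - (\<Sum>x\<in>UNIV. nk n x * W n x)
      + real n * (\<eta> * H^2 / 2) + (real n - 1) * (\<gamma> * \<eta> * H^3 / 2)"
    using Suc by simp
  have sp1: "(\<Sum>k=1..Suc n. pair (occ \<gamma> P nu0 pol_s) r - pair (occ \<gamma> P nu0 (pol k)) r)
     = (\<Sum>k=1..n. pair (occ \<gamma> P nu0 pol_s) r - pair (occ \<gamma> P nu0 (pol k)) r)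
       + (pair (occ \<gamma> P nu0 pol_s) r - pair (occ \<gamma> P nu0 (pol (Suc n))) r)"
    using n1 by (simp add: sum.cl_ivl_Suc)
  have sp2: "(\<Sum>k=1..Suc n. pair (occ \<gamma> P nu0 (pol k)) (CB k))
     = (\<Sum>k=1..n. pair (occ \<gamma> P nu0 (pol k)) (CB k)) + pair (occ \<gamma> P nu0 (pol (Suc n))) (CB (Suc n))"
    using n1 by (simp add: sum.cl_ivl_Suc)
  have rn1: "real (Suc n) * (\<eta> * H^2 / 2) = real n * (\<eta> * H^2 / 2) + \<eta> * H^2 / 2"
    by (simp add: algebra_simps)
  have rr: "real (Suc n) - 1 = (real n - 1) + 1" by simp
  have rn2: "(real (Suc n) - 1) * (\<gamma> * \<eta> * H^3 / 2) = (real n - 1) * (\<gamma> * \<eta> * H^3 / 2) + \<gamma> * \<eta> * H^3 / 2"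
    by (simp only: rr distrib_right mult_1_left)
  have dsum: "(1/\<eta>) * (D 1 - D' n) + (1/\<eta>) * (D (Suc n) - D' (Suc n)) = (1/\<eta>) * (D 1 - D' (Suc n))"
    unfolding dd by (simp add: algebra_simps)
  show ?case
    unfolding sp1 sp2 by (rule lin_aux[OF ih st[unfolded vw e1 e2] dr dsum rn1 rn2])
qed

lemma Dgen_nonneg:
  assumes pp: "is_policy \<pi>" and supp: "\<forall>x. ns x > 0 \<longrightarrow> (\<forall>a. pol_s x a > 0 \<longrightarrow> \<pi> x a > 0)"
  shows "(\<Sum>x\<in>UNIV. ns x * klr (pol_s x) (\<pi> x)) \<ge> 0"
proof (intro sum_nonneg)
  fix x
  show "0 \<le> ns x * klr (pol_s x) (\<pi> x)"
  proof (cases "ns x > 0")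
    case True
    then have "klr (pol_s x) (\<pi> x) \<ge> 0" using supp pp pols
      by (intro klr_nonneg) (auto simp: is_policy_def)
    then show ?thesis using True by simp
  next
    case False
    then have "ns x = 0" using ns_dist by (simp add: is_dist_def order.strict_iff_order)
    then show ?thesis by simp
  qed
qed

lemma main_real:
  assumes supp0: "\<forall>x. ns x > 0 \<longrightarrow> (\<forall>a. pol_s x a > 0 \<longrightarrow> pol 0 x a > 0)"
  shows "(\<Sum>k=1..K. pair (occ \<gamma> P nu0 pol_s) r - pair (occ \<gamma> P nu0 (pol k)) r)
    \<le> 2 * (\<Sum>k=1..K. pair (occ \<gamma> P nu0 (pol k)) (CB k)) + 2 * H + (1/\<eta>) * D 0 + \<eta> * H^3 * real K / 2"
proof -
  have D0: "D 0 \<ge> 0" unfolding D_def by (rule Dgen_nonneg[OF pi0 supp0])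
  have CBs: "(\<Sum>k=1..K. pair (occ \<gamma> P nu0 (pol k)) (CB k)) \<ge> 0"
  proof (intro sum_nonneg)
    fix k assume "k \<in> {1..K}"
    then have k: "1 \<le> k" "k \<le> K" by auto
    show "0 \<le> pair (occ \<gamma> P nu0 (pol k)) (CB k)"
      unfolding pair_split using nk_dist[OF k(2)] pol_policy[OF k(2)] CB_nonneg k
      by (intro sum_nonneg mult_nonneg_nonneg) (auto simp: is_dist_def is_policy_def)
  qed
  have e0: "0 \<le> \<eta> * H^3 * real K / 2" using eta H_pos by simp
  show ?thesis
  proof (cases "K = 0")
    case True
    then show ?thesis using D0 eta H_pos by simp
  next
    case False
    then have K1: "1 \<le> K" by simp
    note ac = accum[OF K1 order.refl supp0]
    have w1: "(\<Sum>x\<in>UNIV. ns x * W K x) \<le> H"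
    proof -
      have "(\<Sum>x\<in>UNIV. ns x * W K x) \<le> (\<Sum>x\<in>UNIV. ns x * H)"
        using ns_dist W_bnd by (intro sum_mono mult_left_mono) (auto simp: is_dist_def)
      also have "\<dots> = (\<Sum>x\<in>UNIV. ns x) * H" by (rule sum_distrib_right[symmetric])
      also have "\<dots> = H" using ns_dist by (simp add: is_dist_def)
      finally show ?thesis .
    qed
    have w2: "(\<Sum>x\<in>UNIV. nk K x * W K x) \<ge> 0"
      using nk_dist[of K] W_bnd by (intro sum_nonneg mult_nonneg_nonneg) (auto simp: is_dist_def)
    have rhoK: "is_policy (rho K)"
    proof -
      have "is_dist (rho K x)" for x
        unfolding rho_def W_def
        by (rule tilt_dist[where H = H]) (use pol_policy Q_bnd eta in \<open>auto simp: is_policy_def\<close>)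
      then show ?thesis by (simp add: is_policy_def)
    qed
    have D'K: "D' K \<ge> 0" unfolding D'_def
      by (rule Dgen_nonneg[OF rhoK]) (use supp0 pol_policy[of K] in \<open>auto simp: rho_def\<close>)
    have D1: "D 1 = D 0" unfolding D_def pol1[OF K1] ..
    have hh: "real K * (\<eta> * H^2 / 2) + (real K - 1) * (\<gamma> * \<eta> * H^3 / 2) \<le> \<eta> * H^3 * real K / 2"
    proof -
      have "H^2 = (1 - \<gamma>) * H^3" using gam by (intro cube_aux) simp
      then have "real K * (\<eta> * H^2 / 2) + (real K - 1) * (\<gamma> * \<eta> * H^3 / 2)
          = \<eta> * H^3 * real K / 2 - \<gamma> * \<eta> * H^3 / 2" by (rule hh_aux)
      moreover have "0 \<le> \<gamma> * \<eta> * H^3 / 2" using gam eta H_pos by simp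
      ultimately show ?thesis by linarith
    qed
    have "(1/\<eta>) * (D 1 - D' K) \<le> (1/\<eta>) * D 0"
      using D'K D1 eta by (intro mult_left_mono) auto
    then show ?thesis using ac w1 w2 hh H_pos by linarith
  qed
qed

end

theorem lemma2:
  fixes P :: "'x::finite \<Rightarrow> 'a::finite \<Rightarrow> 'x \<Rightarrow> real"
    and r :: "'x \<Rightarrow> 'a \<Rightarrow> real"
    and \<gamma> \<eta> :: real
    and nu0 :: "'x \<Rightarrow> real"
    and pol_s :: "'x \<Rightarrow> 'a \<Rightarrow> real"
    and pol :: "nat \<Rightarrow> 'x \<Rightarrow> 'a \<Rightarrow> real"
    and Q CB :: "nat \<Rightarrow> 'x \<Rightarrow> 'a \<Rightarrow> real"
    and V :: "nat \<Rightarrow> 'x \<Rightarrow> real"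
    and Phat :: "nat \<Rightarrow> 'x \<Rightarrow> 'a \<Rightarrow> 'x \<Rightarrow> real"
    and K :: nat
  assumes kernel: "is_kernel P"
    and rew: "\<forall>x a. 0 \<le> r x a \<and> r x a \<le> 1"
    and gam: "0 < \<gamma>" "\<gamma> < 1"
    and init: "is_dist nu0"
    and opt: "optimal_policy \<gamma> P r pol_s"
    and eta: "\<eta> > 0"
    and pi0: "is_policy (pol 0)"
    and Q1: "\<forall>x a. Q 1 x a = 0"
    and V_rec: "\<forall>k x. 1 \<le> k \<and> k \<le> K \<longrightarrow>
        V k x = (1 / \<eta>) * ln (\<Sum>a\<in>UNIV. pol (k - 1) x a * exp (\<eta> * Q k x a))"
    and pi_rec: "\<forall>k x a. 1 \<le> k \<and> k \<le> K \<longrightarrow>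
        pol k x a = pol (k - 1) x a * exp (\<eta> * (Q k x a - V k x))"
    and Q_rec: "\<forall>k x a. 1 \<le> k \<and> k \<le> K \<longrightarrow>
        Q (k + 1) x a = clip (1 / (1 - \<gamma>)) (r x a + CB k x a + \<gamma> * kapply (Phat k) (V k) x a)"
    and CB_nonneg: "\<forall>k x a. 1 \<le> k \<and> k \<le> K \<longrightarrow> CB k x a \<ge> 0"
    and valid: "\<forall>k x a. 1 \<le> k \<and> k \<le> K \<longrightarrow>
        \<bar>\<gamma> * (\<Sum>x'\<in>UNIV. (P x a x' - Phat k x a x') * V k x')\<bar> \<le> CB k x a"
  shows "ereal (\<Sum>k=1..K. pair (occ \<gamma> P nu0 pol_s) r - pair (occ \<gamma> P nu0 (pol k)) r)
     \<le> ereal (2 * (\<Sum>k=1..K. pair (occ \<gamma> P nu0 (pol k)) (CB k)) + 2 * (1 / (1 - \<gamma>)))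
        + ereal (1 / \<eta>) * cond_rel_ent \<gamma> P nu0 pol_s (pol 0)
        + ereal (\<eta> * (1 / (1 - \<gamma>)) ^ 3 * real K / 2)"
proof -
  interpret alg P r \<gamma> \<eta> nu0 pol_s pol Q CB V Phat K
    using assms by (simp add: alg_def)
  show ?thesis
  proof (cases "\<forall>x. ns x > 0 \<longrightarrow> (\<forall>a. pol_s x a > 0 \<longrightarrow> pol 0 x a > 0)")
    case True
    have ce: "cond_rel_ent \<gamma> P nu0 pol_s (pol 0) = ereal (D 0)"
      unfolding cond_rel_ent_def D_def sum_ereal[symmetric]
    proof (intro sum.cong refl)
      fix x
      show "ereal (ns x) * KL (pol_s x) (pol 0 x) = ereal (ns x * klr (pol_s x) (pol 0 x))"
      proof (cases "ns x > 0")
        case True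
        then have "KL (pol_s x) (pol 0 x) = ereal (klr (pol_s x) (pol 0 x))"
          using \<open>\<forall>x. ns x > 0 \<longrightarrow> _\<close> unfolding KL_def klr_def by auto
        then show ?thesis by simp
      next
        case False
        then have "ns x = 0" using ns_dist by (simp add: is_dist_def order.strict_iff_order)
        then show ?thesis by (simp add: zero_ereal_def[symmetric])
      qed
    qed
    have mr: "(\<Sum>k=1..K. pair (occ \<gamma> P nu0 pol_s) r - pair (occ \<gamma> P nu0 (pol k)) r)
    \<le> 2 * (\<Sum>k=1..K. pair (occ \<gamma> P nu0 (pol k)) (CB k)) + 2 * H + (1/\<eta>) * D 0 + \<eta> * H^3 * real K / 2"
      by (rule main_real[OF True])
    show ?thesis unfolding ce using mr by simp
  next
    case False
    then obtain x a where xa: "ns x > 0" "pol_s x a > 0" "\<not> pol 0 x a > 0" by auto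
    have "KL (pol_s x) (pol 0 x) = \<infinity>" using xa unfolding KL_def by auto
    then have "ereal (ns x) * KL (pol_s x) (pol 0 x) = \<infinity>" using xa by simp
    then have "cond_rel_ent \<gamma> P nu0 pol_s (pol 0) = \<infinity>"
      unfolding cond_rel_ent_def sum_Pinfty by auto
    then show ?thesis using eta by simp
  qed
qed


end
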